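(* Let $\{Z_n\}_{n\in\mathbb{N}}$ be a sequence of diagonal matrices $Z_n=\mathrm{diag}(z_1^{(n)},\ldots,z_n^{(n)})$ with $z_j^{(n)}\geq 1$ having bounded squeezing of degree $\zeta\ge0$, such that $\lambda(n)=\frac{1}{2n}\sum_{j=1}^n (z_j^{(n)}+1/z_j^{(n)})$ is uniformly bounded in $n$, and let $\{k_n\}$ be a sequence of subsystem sizes bounded of degree $\kappa\ge0$; write $k=k_n$. Define $f:U(n)\to\mathbb{R}$ by $f(U)=\mathrm{tr}\Big[\big((J_kM_{n,k}(U))^2+\lambda(n)^2I_{2k}\big)^2\Big]$. Equip $U(n)$ with the Hilbert–Schmidt distance $d(U,V)=\|U-V\|_2=\sqrt{\mathrm{tr}((U-V)^*(U-V))}$. Then the Lipschitz constant of $f$ is upper bounded by $Cn^{4\zeta+\kappa/2}$, where $C>0$ is a constant.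
   Context: $J_k=\begin{pmatrix}0_k&-I_k\\ I_k&0_k\end{pmatrix}$. For $U\in U(n)$, $\eta(U)=\begin{pmatrix}\mathrm{Re}(U)&\mathrm{Im}(U)\\ -\mathrm{Im}(U)&\mathrm{Re}(U)\end{pmatrix}$, $M_n(U)=\eta(U)(Z_n\oplus Z_n^{-1})\eta(U)^T$, and $M_{n,k}(U)$ is the $2k\times2k$ submatrix of $M_n(U)$ with rows and columns indexed by $\{1,\ldots,k\}\cup\{n+1,\ldots,n+k\}$. Bounded squeezing of degree $\zeta$: there is $C>0$ with $\|Z_n\|_\infty\le Cn^\zeta$ for all large $n$. Subsystem sizes $k_n\in\{1,\ldots,n\}$ bounded of degree $\kappa$: there is $K>0$ with $k_n\le Kn^\kappa$ for all large $n$. *)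

theory Defs
  imports "HOL-Analysis.Analysis"
begin

text \<open>Square matrices of varying size m are represented as functions
  nat => nat => 'a; only the entries with indices < m matter (0-based indices).\<close>

definition mmul :: "nat \<Rightarrow> (nat \<Rightarrow> nat \<Rightarrow> 'a::comm_semiring_0) \<Rightarrow> (nat \<Rightarrow> nat \<Rightarrow> 'a) \<Rightarrow> (nat \<Rightarrow> nat \<Rightarrow> 'a)" where
  "mmul m A B = (\<lambda>i j. \<Sum>l<m. A i l * B l j)"

definition mtrace :: "nat \<Rightarrow> (nat \<Rightarrow> nat \<Rightarrow> 'a::comm_monoid_add) \<Rightarrow> 'a" where
  "mtrace m A = (\<Sum>i<m. A i i)"

definition mtransp :: "(nat \<Rightarrow> nat \<Rightarrow> 'a) \<Rightarrow> (nat \<Rightarrow> nat \<Rightarrow> 'a)" where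
  "mtransp A = (\<lambda>i j. A j i)"

definition madj :: "(nat \<Rightarrow> nat \<Rightarrow> complex) \<Rightarrow> (nat \<Rightarrow> nat \<Rightarrow> complex)" where
  "madj A = (\<lambda>i j. cnj (A j i))"

definition mid :: "(nat \<Rightarrow> nat \<Rightarrow> 'a::{zero,one})" where
  "mid = (\<lambda>i j. if i = j then 1 else 0)"

definition unitary_mat :: "nat \<Rightarrow> (nat \<Rightarrow> nat \<Rightarrow> complex) \<Rightarrow> bool" where
  "unitary_mat n U \<longleftrightarrow> (\<forall>i<n. \<forall>j<n. mmul n (madj U) U i j = mid i j)"

definition hs_dist :: "nat \<Rightarrow> (nat \<Rightarrow> nat \<Rightarrow> complex) \<Rightarrow> (nat \<Rightarrow> nat \<Rightarrow> complex) \<Rightarrow> real" where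
  "hs_dist n U V = sqrt (Re (mtrace n (mmul n (madj (\<lambda>i j. U i j - V i j)) (\<lambda>i j. U i j - V i j))))"

text \<open>J_k = [[0,-I_k],[I_k,0]] (size 2k).\<close>
definition Jmat :: "nat \<Rightarrow> (nat \<Rightarrow> nat \<Rightarrow> real)" where
  "Jmat k = (\<lambda>i j. if i < k \<and> j = i + k then -1
                   else if k \<le> i \<and> i < 2*k \<and> j + k = i then 1 else 0)"

text \<open>eta(U) = [[Re U, Im U],[-Im U, Re U]] (size 2n).\<close>
definition eta :: "nat \<Rightarrow> (nat \<Rightarrow> nat \<Rightarrow> complex) \<Rightarrow> (nat \<Rightarrow> nat \<Rightarrow> real)" where
  "eta n U = (\<lambda>i j. if i < n \<and> j < n then Re (U i j)
                   else if i < n then Im (U i (j - n))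
                   else if j < n then - Im (U (i - n) j)
                   else Re (U (i - n) (j - n)))"

text \<open>Z_n \<oplus> Z_n^{-1} with Z_n = diag(z n 0, ..., z n (n-1)).\<close>
definition Zblock :: "(nat \<Rightarrow> nat \<Rightarrow> real) \<Rightarrow> nat \<Rightarrow> (nat \<Rightarrow> nat \<Rightarrow> real)" where
  "Zblock z n = (\<lambda>i j. if i \<noteq> j then 0 else if i < n then z n i else 1 / z n (i - n))"

definition Mmat :: "(nat \<Rightarrow> nat \<Rightarrow> real) \<Rightarrow> nat \<Rightarrow> (nat \<Rightarrow> nat \<Rightarrow> complex) \<Rightarrow> (nat \<Rightarrow> nat \<Rightarrow> real)" where
  "Mmat z n U = mmul (2*n) (mmul (2*n) (eta n U) (Zblock z n)) (mtransp (eta n U))"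

text \<open>Index map {0..2k-1} -> {0..k-1} \<union> {n..n+k-1}.\<close>
definition subidx :: "nat \<Rightarrow> nat \<Rightarrow> nat \<Rightarrow> nat" where
  "subidx n k i = (if i < k then i else n + (i - k))"

definition Msub :: "(nat \<Rightarrow> nat \<Rightarrow> real) \<Rightarrow> nat \<Rightarrow> nat \<Rightarrow> (nat \<Rightarrow> nat \<Rightarrow> complex) \<Rightarrow> (nat \<Rightarrow> nat \<Rightarrow> real)" where
  "Msub z n k U = (\<lambda>i j. Mmat z n U (subidx n k i) (subidx n k j))"

definition lam :: "(nat \<Rightarrow> nat \<Rightarrow> real) \<Rightarrow> nat \<Rightarrow> real" where
  "lam z n = (1 / (2 * real n)) * (\<Sum>j<n. z n j + 1 / z n j)"

text \<open>Operator norm of the diagonal matrix Z_n: the largest |z_j^(n)|.\<close>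
definition Znorm :: "(nat \<Rightarrow> nat \<Rightarrow> real) \<Rightarrow> nat \<Rightarrow> real" where
  "Znorm z n = Max ((\<lambda>j. \<bar>z n j\<bar>) ` {..<n})"

definition fobj :: "(nat \<Rightarrow> nat \<Rightarrow> real) \<Rightarrow> nat \<Rightarrow> nat \<Rightarrow> (nat \<Rightarrow> nat \<Rightarrow> complex) \<Rightarrow> real" where
  "fobj z n k U =
     (let A = mmul (2*k) (Jmat k) (Msub z n k U);
          B = (\<lambda>i j. mmul (2*k) A A i j + (lam z n)^2 * mid i j)
      in mtrace (2*k) (mmul (2*k) B B))"

end

theory Submission
  imports Defs
begin
definition vnorm :: "nat \<Rightarrow> (nat \<Rightarrow> real) \<Rightarrow> real" where
  "vnorm m x = L2_set x {..<m}"
definition mv :: "nat \<Rightarrow> (nat \<Rightarrow> nat \<Rightarrow> real) \<Rightarrow> (nat \<Rightarrow> real) \<Rightarrow> nat \<Rightarrow> real" where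
  "mv m A x = (\<lambda>i. \<Sum>j<m. A i j * x j)"
definition opb :: "nat \<Rightarrow> (nat \<Rightarrow> nat \<Rightarrow> real) \<Rightarrow> real \<Rightarrow> bool" where
  "opb m A c \<longleftrightarrow> (\<forall>x. vnorm m (mv m A x) \<le> c * vnorm m x)"
definition hsn :: "nat \<Rightarrow> (nat \<Rightarrow> nat \<Rightarrow> real) \<Rightarrow> real" where
  "hsn m A = sqrt (\<Sum>i<m. \<Sum>j<m. (A i j)^2)"

lemma vnorm_sq: "(vnorm m x)^2 = (\<Sum>i<m. (x i)^2)"
  unfolding vnorm_def L2_set_def by (simp add: sum_nonneg)

lemma vnorm_nonneg: "vnorm m x \<ge> 0" unfolding vnorm_def by simp

lemma vnorm_le_iff: "c \<ge> 0 \<Longrightarrow> vnorm m x \<le> c \<longleftrightarrow> (\<Sum>i<m. (x i)^2) \<le> c^2"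
  by (metis vnorm_sq vnorm_nonneg power_mono abs_of_nonneg real_sqrt_le_iff real_sqrt_abs
      sqrt_le_D)

lemma vnorm_cong: "(\<And>i. i < m \<Longrightarrow> x i = y i) \<Longrightarrow> vnorm m x = vnorm m y"
  unfolding vnorm_def by (rule L2_set_cong) auto

lemma mv_mmul: "mv m (mmul m A B) x = mv m A (mv m B x)"
  unfolding mv_def mmul_def
  by (auto simp: sum_distrib_left sum_distrib_right mult.assoc intro!: ext sum.swap[THEN trans])

lemma opb_mul: "opb m A a \<Longrightarrow> opb m B b \<Longrightarrow> 0 \<le> a \<Longrightarrow> opb m (mmul m A B) (a*b)"
  unfolding opb_def mv_mmul
  by (metis (no_types, opaque_lifting) mult.assoc mult_left_mono order_trans)

lemma inner_le: "(\<Sum>i<m. x i * y i) \<le> vnorm m x * vnorm m y"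
proof -
  have "(\<Sum>i<m. x i * y i) \<le> (\<Sum>i<m. \<bar>x i\<bar> * \<bar>y i\<bar>)"
    by (rule sum_mono) (metis abs_ge_self abs_mult)
  also have "\<dots> \<le> vnorm m x * vnorm m y" unfolding vnorm_def by (rule L2_set_mult_ineq)
  finally show ?thesis .
qed

lemma opb_transp: assumes "opb m A c" "c \<ge> 0" shows "opb m (mtransp A) c"
  unfolding opb_def
proof
  fix y
  define w where "w = mv m (mtransp A) y"
  have "(vnorm m w)^2 = (\<Sum>i<m. w i * (\<Sum>l<m. A l i * y l))"
    unfolding vnorm_sq by (simp add: w_def mv_def mtransp_def power2_eq_square)
  also have "\<dots> = (\<Sum>l<m. mv m A w l * y l)"
    unfolding mv_def by (auto simp: sum_distrib_left sum_distrib_right mult_ac intro!: sum.swap[THEN trans])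
  also have "\<dots> \<le> vnorm m (mv m A w) * vnorm m y" by (rule inner_le)
  also have "\<dots> \<le> c * vnorm m w * vnorm m y"
    using assms(1) unfolding opb_def by (simp add: mult_right_mono vnorm_nonneg)
  finally have h: "(vnorm m w)^2 \<le> c * vnorm m w * vnorm m y" .
  show "vnorm m w \<le> c * vnorm m y"
  proof (cases "vnorm m w = 0")
    case True then show ?thesis using assms(2) vnorm_nonneg by simp
  next
    case False
    then have "vnorm m w > 0" using vnorm_nonneg by (metis less_eq_real_def)
    with h show ?thesis by (simp add: power2_eq_square mult_ac)
  qed
qed

lemma hsn_cols: "hsn m A = sqrt (\<Sum>j<m. (vnorm m (\<lambda>i. A i j))^2)"
  unfolding hsn_def vnorm_sq by (subst sum.swap) simp

lemma hsn_nonneg: "hsn m A \<ge> 0" unfolding hsn_def by (simp add: sum_nonneg)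

lemma hsn_transp: "hsn m (mtransp A) = hsn m A"
  unfolding hsn_def mtransp_def by (subst sum.swap) simp

lemma mmul_transp: "mtransp (mmul m A B) = mmul m (mtransp B) (mtransp A)"
  unfolding mtransp_def mmul_def by (auto simp: mult.commute)

lemma hs_mul_left: assumes "opb m A a" "0 \<le> a" shows "hsn m (mmul m A B) \<le> a * hsn m B"
proof -
  have "(\<Sum>j<m. (vnorm m (\<lambda>i. mmul m A B i j))^2) \<le> (\<Sum>j<m. (a * vnorm m (\<lambda>i. B i j))^2)"
  proof (rule sum_mono)
    fix j
    have "(\<lambda>i. mmul m A B i j) = mv m A (\<lambda>i. B i j)" unfolding mmul_def mv_def by simp
    then have "vnorm m (\<lambda>i. mmul m A B i j) \<le> a * vnorm m (\<lambda>i. B i j)" using assms(1) opb_def by simp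
    then show "(vnorm m (\<lambda>i. mmul m A B i j))^2 \<le> (a * vnorm m (\<lambda>i. B i j))^2"
      by (simp add: power_mono vnorm_nonneg)
  qed
  then have "hsn m (mmul m A B) \<le> sqrt (\<Sum>j<m. (a * vnorm m (\<lambda>i. B i j))^2)"
    unfolding hsn_cols by simp
  also have "\<dots> = a * hsn m B" unfolding hsn_cols
    using assms(2) by (simp add: power_mult_distrib sum_distrib_left[symmetric] real_sqrt_mult)
  finally show ?thesis .
qed

lemma hs_mul_right: assumes "opb m B b" "0 \<le> b" shows "hsn m (mmul m A B) \<le> hsn m A * b"
proof -
  have "hsn m (mmul m A B) = hsn m (mmul m (mtransp B) (mtransp A))"
    by (metis hsn_transp mmul_transp)
  also have "\<dots> \<le> b * hsn m (mtransp A)" by (rule hs_mul_left[OF opb_transp[OF assms] assms(2)])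
  finally show ?thesis by (simp add: hsn_transp mult.commute)
qed

lemma hsn_L2: "hsn m A = L2_set (\<lambda>p. A (fst p) (snd p)) ({..<m} \<times> {..<m})"
  unfolding hsn_def L2_set_def by (simp add: sum.cartesian_product split_def)

lemma hsn_add: "hsn m (\<lambda>i j. A i j + B i j) \<le> hsn m A + hsn m B"
  unfolding hsn_L2 by (rule L2_set_triangle_ineq)

lemma hsn_cong: "(\<And>i j. i < m \<Longrightarrow> j < m \<Longrightarrow> A i j = B i j) \<Longrightarrow> hsn m A = hsn m B"
  unfolding hsn_def by simp

lemma trace_le: "\<bar>mtrace m X\<bar> \<le> sqrt m * hsn m X"
proof -
  have "\<bar>mtrace m X\<bar> \<le> (\<Sum>i<m. \<bar>1::real\<bar> * \<bar>X i i\<bar>)" unfolding mtrace_def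
    by (simp add: sum_abs)
  also have "\<dots> \<le> L2_set (\<lambda>_. 1) {..<m} * L2_set (\<lambda>i. X i i) {..<m}" by (rule L2_set_mult_ineq)
  also have "L2_set (\<lambda>_. 1) {..<m} = sqrt m" by (simp add: L2_set_constant)
  also have "L2_set (\<lambda>i. X i i) {..<m} \<le> hsn m X"
    unfolding L2_set_def hsn_def
    by (intro real_sqrt_le_mono sum_mono member_le_sum) auto
  finally show ?thesis by (simp add: mult_left_mono)
qed

lemma opb_add: assumes "opb m A a" "opb m B b" shows "opb m (\<lambda>i j. A i j + B i j) (a+b)"
  unfolding opb_def
proof
  fix x
  have "mv m (\<lambda>i j. A i j + B i j) x = (\<lambda>i. mv m A x i + mv m B x i)"
    unfolding mv_def by (auto simp: distrib_right sum.distrib)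
  then have "vnorm m (mv m (\<lambda>i j. A i j + B i j) x) \<le> vnorm m (mv m A x) + vnorm m (mv m B x)"
    unfolding vnorm_def by (simp add: L2_set_triangle_ineq)
  also have "\<dots> \<le> (a+b) * vnorm m x" using assms unfolding opb_def by (simp add: distrib_right add_mono)
  finally show "vnorm m (mv m (\<lambda>i j. A i j + B i j) x) \<le> (a+b) * vnorm m x" .
qed

lemma opb_diag: assumes "\<And>i j. i < m \<Longrightarrow> j < m \<Longrightarrow> i \<noteq> j \<Longrightarrow> D i j = 0"
  and "\<And>i. i < m \<Longrightarrow> \<bar>D i i\<bar> \<le> c"
  shows "opb m D c"
  unfolding opb_def
proof
  fix x
  have c0: "c \<ge> 0 \<or> m = 0" using assms(2)[of 0] by auto
  have e: "mv m D x i = D i i * x i" if "i < m" for i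
  proof -
    have "mv m D x i = (\<Sum>j<m. if j = i then D i i * x i else 0)"
      unfolding mv_def using assms(1) that by (intro sum.cong) auto
    then show ?thesis using that by simp
  qed
  have "(\<Sum>i<m. (mv m D x i)^2) \<le> (\<Sum>i<m. c^2 * (x i)^2)"
  proof (intro sum_mono)
    fix i assume i: "i \<in> {..<m}"
    have "(D i i)^2 \<le> c^2" using assms(2) i by (metis abs_ge_zero power2_abs power_mono lessThan_iff)
    then show "(mv m D x i)^2 \<le> c^2 * (x i)^2" using e i by (simp add: power_mult_distrib mult_right_mono)
  qed
  also have "\<dots> = (c * vnorm m x)^2" by (simp add: power_mult_distrib vnorm_sq sum_distrib_left)
  finally have h: "(\<Sum>i<m. (mv m D x i)^2) \<le> (c * vnorm m x)^2" .
  show "vnorm m (mv m D x) \<le> c * vnorm m x"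
  proof (cases "m = 0")
    case True then show ?thesis by (simp add: vnorm_def)
  next
    case False
    then have "c \<ge> 0" using c0 by simp
    then show ?thesis using h vnorm_le_iff[of "c * vnorm m x"] vnorm_nonneg[of m x] by simp
  qed
qed

lemma opb_smult_id: "opb m (\<lambda>i j. c * mid i j) \<bar>c\<bar>"
  by (rule opb_diag) (auto simp: mid_def)

lemma prod_diff: assumes "opb m X a" "opb m Y a" "0 \<le> a"
  shows "hsn m (\<lambda>i j. mmul m X X i j - mmul m Y Y i j) \<le> 2 * a * hsn m (\<lambda>i j. X i j - Y i j)"
proof -
  let ?D = "\<lambda>i j. X i j - Y i j"
  have e: "(\<lambda>i j. mmul m X X i j - mmul m Y Y i j) = (\<lambda>i j. mmul m X ?D i j + mmul m ?D Y i j)"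
    unfolding mmul_def by (auto simp: sum.distrib[symmetric] algebra_simps intro!: ext sum.cong)
  have "hsn m (\<lambda>i j. mmul m X ?D i j + mmul m ?D Y i j) \<le> hsn m (mmul m X ?D) + hsn m (mmul m ?D Y)"
    by (rule hsn_add)
  also have "\<dots> \<le> a * hsn m ?D + hsn m ?D * a"
    by (intro add_mono hs_mul_left hs_mul_right assms)
  finally show ?thesis unfolding e by simp
qed

lemma sum_split2: fixes n :: nat shows "(\<Sum>i<2*n. f i) = (\<Sum>i<n. f i) + (\<Sum>i<n. f (n+i))"
proof -
  have e: "{..<2*n} = {..<n} \<union> (\<lambda>i. n+i) ` {..<n}"
  proof (rule set_eqI, rule iffI)
    fix x assume "x \<in> {..<2*n}"
    then show "x \<in> {..<n} \<union> (\<lambda>i. n+i) ` {..<n}"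
      by (cases "x < n") (auto intro!: image_eqI[where x="x-n"])
  qed auto
  have "(\<Sum>i<2*n. f i) = (\<Sum>i<n. f i) + (\<Sum>i\<in>(\<lambda>i. n+i) ` {..<n}. f i)"
    unfolding e by (rule sum.union_disjoint) auto
  also have "(\<Sum>i\<in>(\<lambda>i. n+i) ` {..<n}. f i) = (\<Sum>i<n. f (n+i))"
    by (subst sum.reindex) (auto simp: inj_on_def)
  finally show ?thesis .
qed

lemma unit_parts: assumes "unitary_mat n U" "i<n" "j<n"
  shows "(\<Sum>l<n. Re (U l i) * Re (U l j) + Im (U l i) * Im (U l j)) = (if i = j then 1 else 0)"
    "(\<Sum>l<n. Re (U l i) * Im (U l j) - Im (U l i) * Re (U l j)) = 0"
proof -
  have h: "(\<Sum>l<n. cnj (U l i) * U l j) = mid i j" using assms unfolding unitary_mat_def mmul_def madj_def by simp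
  from arg_cong[OF h, of Re] show "(\<Sum>l<n. Re (U l i) * Re (U l j) + Im (U l i) * Im (U l j)) = (if i = j then 1 else 0)"
    by (simp add: Re_sum mid_def)
  from arg_cong[OF h, of Im] show "(\<Sum>l<n. Re (U l i) * Im (U l j) - Im (U l i) * Re (U l j)) = 0"
    by (simp add: Im_sum mid_def)
qed

lemma etaTeta: assumes "unitary_mat n U" "i < 2*n" "j < 2*n"
  shows "(\<Sum>l<2*n. eta n U l i * eta n U l j) = mid i j"
proof -
  have s: "(\<Sum>l<2*n. eta n U l i * eta n U l j) = (\<Sum>l<n. eta n U l i * eta n U l j + eta n U (n+l) i * eta n U (n+l) j)"
    by (simp add: sum_split2 sum.distrib)
  consider "i < n" "j < n" | "i < n" "\<not> j < n" | "\<not> i < n" "j < n" | "\<not> i < n" "\<not> j < n" by blast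
  then show ?thesis
  proof cases
    case 1
    have "(\<Sum>l<n. eta n U l i * eta n U l j + eta n U (n+l) i * eta n U (n+l) j)
       = (\<Sum>l<n. Re (U l i) * Re (U l j) + Im (U l i) * Im (U l j))"
      using 1 by (intro sum.cong) (auto simp: eta_def)
    then show ?thesis using s unit_parts(1)[OF assms(1) 1] by (simp add: mid_def)
  next
    case 2
    have "(\<Sum>l<n. eta n U l i * eta n U l j + eta n U (n+l) i * eta n U (n+l) j)
       = (\<Sum>l<n. Re (U l i) * Im (U l (j-n)) - Im (U l i) * Re (U l (j-n)))"
      using 2 by (intro sum.cong) (auto simp: eta_def)
    then show ?thesis using s unit_parts(2)[OF assms(1) \<open>i<n\<close>, of "j-n"] 2 assms by (simp add: mid_def)
  next
    case 3
    have "(\<Sum>l<n. eta n U l i * eta n U l j + eta n U (n+l) i * eta n U (n+l) j)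
       = (\<Sum>l<n. (Re (U l j) * Im (U l (i-n)) - Im (U l j) * Re (U l (i-n))))"
      using 3 by (intro sum.cong) (auto simp: eta_def)
    then show ?thesis using s unit_parts(2)[OF assms(1) \<open>j<n\<close>, of "i-n"] 3 assms by (simp add: mid_def)
  next
    case 4
    have "(\<Sum>l<n. eta n U l i * eta n U l j + eta n U (n+l) i * eta n U (n+l) j)
       = (\<Sum>l<n. Re (U l (i-n)) * Re (U l (j-n)) + Im (U l (i-n)) * Im (U l (j-n)))"
      using 4 by (intro sum.cong) (auto simp: eta_def)
    then show ?thesis using s unit_parts(1)[OF assms(1), of "i-n" "j-n"] 4 assms by (auto simp: mid_def)
  qed
qed

lemma isometry: assumes "\<And>i j. i<m \<Longrightarrow> j<m \<Longrightarrow> (\<Sum>l<m. A l i * A l j) = mid i j"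
  shows "vnorm m (mv m A x) = vnorm m x"
proof -
  have "(\<Sum>l<m. (mv m A x l)^2) = (\<Sum>l<m. \<Sum>i<m. \<Sum>j<m. (A l i * x i) * (A l j * x j))"
    by (simp add: mv_def power2_eq_square sum_product)
  also have "\<dots> = (\<Sum>i<m. \<Sum>l<m. \<Sum>j<m. (A l i * x i) * (A l j * x j))"
    by (rule sum.swap)
  also have "\<dots> = (\<Sum>i<m. \<Sum>j<m. \<Sum>l<m. (A l i * x i) * (A l j * x j))"
    apply (rule sum.cong[OF refl]) apply (rule sum.swap) done
  also have "\<dots> = (\<Sum>i<m. \<Sum>j<m. x i * x j * (\<Sum>l<m. A l i * A l j))"
    by (simp add: sum_distrib_left mult_ac)
  also have "\<dots> = (\<Sum>i<m. \<Sum>j<m. if j = i then x i * x i else 0)"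
    using assms by (intro sum.cong refl) (auto simp: mid_def)
  also have "\<dots> = (\<Sum>i<m. (x i)^2)" by (simp add: power2_eq_square)
  finally show ?thesis unfolding vnorm_def L2_set_def by simp
qed

lemma opb_eta: "unitary_mat n U \<Longrightarrow> opb (2*n) (eta n U) 1"
  unfolding opb_def using isometry[of "2*n" "eta n U"] etaTeta by simp

lemma eta_diff: "(\<lambda>i j. eta n U i j - eta n V i j) = eta n (\<lambda>i j. U i j - V i j)"
  unfolding eta_def by (auto intro!: ext)

lemma hs_eta: "hsn (2*n) (\<lambda>i j. eta n U i j - eta n V i j) = sqrt 2 * hs_dist n U V"
proof -
  define W where "W = (\<lambda>i j. U i j - V i j)"
  have "(\<Sum>i<2*n. \<Sum>j<2*n. (eta n W i j)^2)
      = (\<Sum>i<n. \<Sum>j<n. (eta n W i j)^2 + (eta n W i (n+j))^2 + (eta n W (n+i) j)^2 + (eta n W (n+i) (n+j))^2)"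
    by (simp add: sum_split2 sum.distrib)
  also have "\<dots> = (\<Sum>i<n. \<Sum>j<n. 2 * ((Re (W i j))^2 + (Im (W i j))^2))"
    by (intro sum.cong refl) (auto simp: eta_def)
  also have "\<dots> = 2 * (\<Sum>i<n. \<Sum>j<n. (Re (W i j))^2 + (Im (W i j))^2)"
    by (simp add: sum_distrib_left)
  finally have a: "(\<Sum>i<2*n. \<Sum>j<2*n. (eta n W i j)^2) = 2 * (\<Sum>i<n. \<Sum>j<n. (Re (W i j))^2 + (Im (W i j))^2)" .
  have b: "Re (mtrace n (mmul n (madj W) W)) = (\<Sum>i<n. \<Sum>j<n. (Re (W i j))^2 + (Im (W i j))^2)"
    unfolding mtrace_def mmul_def madj_def
    by (simp add: Re_sum power2_eq_square) (rule sum.swap)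
  show ?thesis unfolding eta_diff hsn_def hs_dist_def W_def[symmetric] a b
    by (simp add: real_sqrt_mult)
qed

lemma Znorm_ge: assumes "j < n" shows "\<bar>z n j\<bar> \<le> Znorm z n"
  unfolding Znorm_def using assms by (intro Max_ge) auto

lemma Znorm_ge1: assumes "\<And>j. j < n \<Longrightarrow> z n j \<ge> 1" "n \<ge> 1" shows "Znorm z n \<ge> 1"
  using Znorm_ge[of 0 n z] assms by fastforce

lemma opb_Z: assumes "\<And>j. j < n \<Longrightarrow> z n j \<ge> 1" "n \<ge> 1"
  shows "opb (2*n) (Zblock z n) (Znorm z n)"
proof (rule opb_diag)
  fix i assume i: "i < 2*n"
  show "\<bar>Zblock z n i i\<bar> \<le> Znorm z n"
  proof (cases "i < n")
    case True then show ?thesis by (simp add: Zblock_def Znorm_ge)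
  next
    case False
    then have "z n (i-n) \<ge> 1" using assms i by simp
    then have "\<bar>1 / z n (i-n)\<bar> \<le> 1" by simp
    then show ?thesis using False Znorm_ge1[of n z, OF assms] by (simp add: Zblock_def)
  qed
qed (simp add: Zblock_def)

lemma opb_M: assumes "\<And>j. j < n \<Longrightarrow> z n j \<ge> 1" "n \<ge> 1" "unitary_mat n U"
  shows "opb (2*n) (Mmat z n U) (Znorm z n)"
proof -
  have "opb (2*n) (Mmat z n U) (1 * Znorm z n * 1)"
    unfolding Mmat_def
    by (intro opb_mul opb_transp opb_eta opb_Z assms) (use Znorm_ge1[of n z, OF assms(1,2)] in auto)
  then show ?thesis by simp
qed

lemma subidx_inj: "k \<le> n \<Longrightarrow> inj_on (subidx n k) {..<2*k}"
  unfolding inj_on_def subidx_def by auto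

lemma subidx_range: "k \<le> n \<Longrightarrow> subidx n k ` {..<2*k} \<subseteq> {..<2*n}"
  unfolding subidx_def by auto

lemma sum_sub_le: fixes s :: "nat \<Rightarrow> nat" assumes "inj_on s {..<m}" "s ` {..<m} \<subseteq> {..<N}" "\<And>l. g l \<ge> (0::real)"
  shows "(\<Sum>i<m. g (s i)) \<le> (\<Sum>l<N. g l)"
proof -
  have "(\<Sum>i<m. g (s i)) = (\<Sum>l\<in>s ` {..<m}. g l)" using assms(1) by (simp add: sum.reindex)
  also have "\<dots> \<le> (\<Sum>l<N. g l)" using assms by (intro sum_mono2) auto
  finally show ?thesis .
qed

lemma sum_sub_eq: fixes s :: "nat \<Rightarrow> nat" assumes "inj_on s {..<m}" "s ` {..<m} \<subseteq> {..<N}" "\<And>l. l \<notin> s ` {..<m} \<Longrightarrow> g l = (0::real)"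
  shows "(\<Sum>l<N. g l) = (\<Sum>i<m. g (s i))"
proof -
  have "(\<Sum>l<N. g l) = (\<Sum>l\<in>s ` {..<m}. g l)" using assms by (intro sum.mono_neutral_right) auto
  also have "\<dots> = (\<Sum>i<m. g (s i))" using assms(1) by (simp add: sum.reindex)
  finally show ?thesis .
qed

lemma hsn_sub: assumes "k \<le> n"
  shows "hsn (2*k) (\<lambda>i j. D (subidx n k i) (subidx n k j)) \<le> hsn (2*n) D"
proof -
  note inj = subidx_inj[OF assms] and rng = subidx_range[OF assms]
  have "(\<Sum>i<2*k. \<Sum>j<2*k. (D (subidx n k i) (subidx n k j))^2) \<le> (\<Sum>i<2*k. \<Sum>l<2*n. (D (subidx n k i) l)^2)"
    by (intro sum_mono sum_sub_le[OF inj rng]) auto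
  also have "\<dots> \<le> (\<Sum>l'<2*n. \<Sum>l<2*n. (D l' l)^2)"
    by (intro sum_sub_le[OF inj rng, where g="\<lambda>l'. \<Sum>l<2*n. (D l' l)^2"] sum_nonneg) auto
  finally show ?thesis unfolding hsn_def by simp
qed

lemma opb_sub: assumes "k \<le> n" "opb (2*n) M c"
  shows "opb (2*k) (\<lambda>i j. M (subidx n k i) (subidx n k j)) c"
  unfolding opb_def
proof
  fix x :: "nat \<Rightarrow> real"
  note inj = subidx_inj[OF assms(1)] and rng = subidx_range[OF assms(1)]
  let ?s = "subidx n k" and ?S = "subidx n k ` {..<2*k}"
  define y where "y l = (if l \<in> ?S then x (the_inv_into {..<2*k} ?s l) else 0)" for l
  have ys: "y (?s j) = x j" if "j < 2*k" for j
    using that inj by (simp add: y_def the_inv_into_f_f)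
  have e1: "mv (2*k) (\<lambda>i j. M (?s i) (?s j)) x i = mv (2*n) M y (?s i)" for i
  proof -
    have "mv (2*n) M y (?s i) = (\<Sum>j<2*k. M (?s i) (?s j) * y (?s j))"
      unfolding mv_def by (rule sum_sub_eq[OF inj rng]) (simp add: y_def)
    also have "\<dots> = mv (2*k) (\<lambda>i j. M (?s i) (?s j)) x i"
      unfolding mv_def using ys by simp
    finally show ?thesis by simp
  qed
  have e2: "vnorm (2*n) y = vnorm (2*k) x"
  proof -
    have "(\<Sum>l<2*n. (y l)^2) = (\<Sum>j<2*k. (y (?s j))^2)"
      by (rule sum_sub_eq[OF inj rng]) (simp add: y_def)
    also have "\<dots> = (\<Sum>j<2*k. (x j)^2)" using ys by simp
    finally show ?thesis unfolding vnorm_def L2_set_def by simp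
  qed
  have "(\<Sum>i<2*k. (mv (2*k) (\<lambda>i j. M (?s i) (?s j)) x i)^2) \<le> (\<Sum>l<2*n. (mv (2*n) M y l)^2)"
    unfolding e1 by (rule sum_sub_le[OF inj rng]) simp
  then have "vnorm (2*k) (mv (2*k) (\<lambda>i j. M (?s i) (?s j)) x) \<le> vnorm (2*n) (mv (2*n) M y)"
    unfolding vnorm_def L2_set_def by simp
  also have "\<dots> \<le> c * vnorm (2*n) y" using assms(2) opb_def by blast
  finally show "vnorm (2*k) (mv (2*k) (\<lambda>i j. M (?s i) (?s j)) x) \<le> c * vnorm (2*k) x"
    unfolding e2 .
qed

lemma mv_J: assumes "i < 2*k" shows "mv (2*k) (Jmat k) x i = (if i < k then - x (i+k) else x (i-k))"
proof (cases "i < k")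
  case True
  have "mv (2*k) (Jmat k) x i = (\<Sum>j<2*k. if j = i+k then - x (i+k) else 0)"
    unfolding mv_def using True by (intro sum.cong) (auto simp: Jmat_def)
  then show ?thesis using True by simp
next
  case False
  have "mv (2*k) (Jmat k) x i = (\<Sum>j<2*k. if j = i-k then x (i-k) else 0)"
    unfolding mv_def using False assms by (intro sum.cong) (auto simp: Jmat_def)
  then show ?thesis using False assms by simp
qed

lemma opb_J: "opb (2*k) (Jmat k) 1"
  unfolding opb_def
proof
  fix x
  have "(\<Sum>i<2*k. (mv (2*k) (Jmat k) x i)^2) = (\<Sum>i<k. (x (i+k))^2) + (\<Sum>i<k. (x i)^2)"
    by (simp add: sum_split2 mv_J)
  also have "\<dots> = (\<Sum>i<2*k. (x i)^2)" by (simp add: sum_split2 add.commute)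
  finally show "vnorm (2*k) (mv (2*k) (Jmat k) x) \<le> 1 * vnorm (2*k) x"
    unfolding vnorm_def L2_set_def by simp
qed

lemma mmul_diffL: fixes A :: "nat \<Rightarrow> nat \<Rightarrow> real" shows "mmul m (\<lambda>i j. A i j - B i j) C = (\<lambda>i j. mmul m A C i j - mmul m B C i j)"
  unfolding mmul_def by (auto simp: left_diff_distrib sum_subtractf[symmetric] intro!: ext)

lemma mmul_diffR: fixes A :: "nat \<Rightarrow> nat \<Rightarrow> real" shows "mmul m A (\<lambda>i j. B i j - C i j) = (\<lambda>i j. mmul m A B i j - mmul m A C i j)"
  unfolding mmul_def by (auto simp: right_diff_distrib sum_subtractf[symmetric] intro!: ext)

lemma mtransp_diff: "mtransp (\<lambda>i j. A i j - B i j) = (\<lambda>i j. mtransp A i j - mtransp B i j)"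
  unfolding mtransp_def by simp

lemma sandwich_diff: fixes E :: "nat \<Rightarrow> nat \<Rightarrow> real" shows
  "(\<lambda>i j. mmul m (mmul m E Z) (mtransp E) i j - mmul m (mmul m F Z) (mtransp F) i j)
   = (\<lambda>i j. mmul m (mmul m (\<lambda>i j. E i j - F i j) Z) (mtransp E) i j
          + mmul m (mmul m F Z) (mtransp (\<lambda>i j. E i j - F i j)) i j)"
  unfolding mmul_diffL mmul_diffR mtransp_diff by (rule ext)+ simp

lemma hsn_DM: assumes "\<And>j. j < n \<Longrightarrow> z n j \<ge> 1" "n \<ge> 1" "unitary_mat n U" "unitary_mat n V"
  shows "hsn (2*n) (\<lambda>i j. Mmat z n U i j - Mmat z n V i j) \<le> 2 * Znorm z n * (sqrt 2 * hs_dist n U V)"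
proof -
  let ?E = "eta n U" and ?F = "eta n V" and ?Z = "Zblock z n" and ?m = "2*n"
  let ?D = "\<lambda>i j. ?E i j - ?F i j"
  have Zn: "Znorm z n \<ge> 0" using Znorm_ge1[of n z, OF assms(1,2)] by simp
  have "hsn ?m (\<lambda>i j. Mmat z n U i j - Mmat z n V i j)
     = hsn ?m (\<lambda>i j. mmul ?m (mmul ?m ?D ?Z) (mtransp ?E) i j + mmul ?m (mmul ?m ?F ?Z) (mtransp ?D) i j)"
    unfolding Mmat_def sandwich_diff ..
  also have "\<dots> \<le> hsn ?m (mmul ?m (mmul ?m ?D ?Z) (mtransp ?E)) + hsn ?m (mmul ?m (mmul ?m ?F ?Z) (mtransp ?D))"
    by (rule hsn_add)
  also have "hsn ?m (mmul ?m (mmul ?m ?D ?Z) (mtransp ?E)) \<le> hsn ?m (mmul ?m ?D ?Z) * 1"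
    by (intro hs_mul_right opb_transp opb_eta assms) auto
  also have "hsn ?m (mmul ?m ?D ?Z) \<le> hsn ?m ?D * Znorm z n"
    by (intro hs_mul_right opb_Z assms Zn)
  also have "hsn ?m (mmul ?m (mmul ?m ?F ?Z) (mtransp ?D)) \<le> (1 * Znorm z n) * hsn ?m (mtransp ?D)"
    by (intro hs_mul_left opb_mul opb_eta opb_Z assms) (use Zn in auto)
  finally have "hsn ?m (\<lambda>i j. Mmat z n U i j - Mmat z n V i j) \<le> 2 * Znorm z n * hsn ?m ?D"
    by (simp add: hsn_transp)
  then show ?thesis unfolding hs_eta .
qed

lemma core: assumes z1: "\<And>j. j < n \<Longrightarrow> z n j \<ge> 1" and n1: "n \<ge> 1" and kn: "k \<le> n"
  and U: "unitary_mat n U" and V: "unitary_mat n V"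
  shows "\<bar>fobj z n k U - fobj z n k V\<bar>
    \<le> 16 * sqrt k * (Znorm z n)^2 * ((Znorm z n)^2 + (lam z n)^2) * hs_dist n U V"
proof -
  define m where "m = 2*k"
  define Zn where "Zn = Znorm z n"
  define l where "l = lam z n"
  have Zn1: "Zn \<ge> 1" unfolding Zn_def using Znorm_ge1[of n z, OF z1 n1] .
  define A where "A W = mmul m (Jmat k) (Msub z n k W)" for W
  define B where "B W = (\<lambda>i j. mmul m (A W) (A W) i j + l^2 * mid i j)" for W
  have f: "fobj z n k W = mtrace m (mmul m (B W) (B W))" for W
    unfolding fobj_def Let_def B_def A_def m_def l_def ..
  have oM: "opb m (Msub z n k W) Zn" if "unitary_mat n W" for W
    unfolding m_def Zn_def Msub_def by (rule opb_sub[OF kn opb_M[of n z, OF z1 n1 that]])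
  have oA: "opb m (A W) Zn" if "unitary_mat n W" for W
  proof -
    have "opb m (A W) (1 * Zn)" unfolding A_def
      by (rule opb_mul) (use opb_J oM[OF that] m_def in auto)
    then show ?thesis by simp
  qed
  have oB: "opb m (B W) (Zn^2 + l^2)" if "unitary_mat n W" for W
  proof -
    have "opb m (B W) (Zn * Zn + \<bar>l^2\<bar>)" unfolding B_def
      by (intro opb_add opb_mul oA that opb_smult_id) (use Zn1 in auto)
    then show ?thesis by (simp add: power2_eq_square)
  qed
  have b0: "Zn^2 + l^2 \<ge> 0" by simp
  have DB: "(\<lambda>i j. B U i j - B V i j) = (\<lambda>i j. mmul m (A U) (A U) i j - mmul m (A V) (A V) i j)"
    unfolding B_def by simp
  have DA: "(\<lambda>i j. A U i j - A V i j) = mmul m (Jmat k) (\<lambda>i j. Msub z n k U i j - Msub z n k V i j)"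
    unfolding A_def mmul_diffR ..
  have h1: "\<bar>fobj z n k U - fobj z n k V\<bar> \<le> sqrt m * hsn m (\<lambda>i j. mmul m (B U) (B U) i j - mmul m (B V) (B V) i j)"
  proof -
    have "fobj z n k U - fobj z n k V = mtrace m (\<lambda>i j. mmul m (B U) (B U) i j - mmul m (B V) (B V) i j)"
      unfolding f mtrace_def by (simp add: sum_subtractf)
    then show ?thesis using trace_le by simp
  qed
  have h2: "hsn m (\<lambda>i j. mmul m (B U) (B U) i j - mmul m (B V) (B V) i j) \<le> 2 * (Zn^2 + l^2) * hsn m (\<lambda>i j. B U i j - B V i j)"
    by (rule prod_diff[OF oB[OF U] oB[OF V] b0])
  have h3: "hsn m (\<lambda>i j. B U i j - B V i j) \<le> 2 * Zn * hsn m (\<lambda>i j. A U i j - A V i j)"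
    unfolding DB by (rule prod_diff[OF oA[OF U] oA[OF V]]) (use Zn1 in auto)
  have h4: "hsn m (\<lambda>i j. A U i j - A V i j) \<le> 1 * hsn m (\<lambda>i j. Msub z n k U i j - Msub z n k V i j)"
    unfolding DA by (rule hs_mul_left) (auto simp: m_def opb_J)
  have h5: "hsn m (\<lambda>i j. Msub z n k U i j - Msub z n k V i j) \<le> hsn (2*n) (\<lambda>i j. Mmat z n U i j - Mmat z n V i j)"
    unfolding m_def Msub_def by (rule hsn_sub[OF kn])
  have h6: "hsn (2*n) (\<lambda>i j. Mmat z n U i j - Mmat z n V i j) \<le> 2 * Zn * (sqrt 2 * hs_dist n U V)"
    unfolding Zn_def by (rule hsn_DM[of n z, OF z1 n1 U V])
  have sm: "sqrt m = sqrt 2 * sqrt k" unfolding m_def by (simp add: real_sqrt_mult)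
  have Zn0: "0 \<le> 2 * Zn" using Zn1 by simp
  have b2: "0 \<le> 2 * (Zn^2 + l^2)" by simp
  have sq0: "0 \<le> sqrt (real m)" by simp
  note h1
  also have "sqrt m * hsn m (\<lambda>i j. mmul m (B U) (B U) i j - mmul m (B V) (B V) i j)
     \<le> sqrt m * (2 * (Zn^2 + l^2) * hsn m (\<lambda>i j. B U i j - B V i j))"
    by (rule mult_left_mono[OF h2 sq0])
  also have "\<dots> \<le> sqrt m * (2 * (Zn^2 + l^2) * (2 * Zn * hsn m (\<lambda>i j. A U i j - A V i j)))"
    by (rule mult_left_mono[OF mult_left_mono[OF h3 b2] sq0])
  also have "\<dots> \<le> sqrt m * (2 * (Zn^2 + l^2) * (2 * Zn * (1 * hsn m (\<lambda>i j. Msub z n k U i j - Msub z n k V i j))))"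
    by (rule mult_left_mono[OF mult_left_mono[OF mult_left_mono[OF h4 Zn0] b2] sq0])
  also have "\<dots> \<le> sqrt m * (2 * (Zn^2 + l^2) * (2 * Zn * (1 * hsn (2*n) (\<lambda>i j. Mmat z n U i j - Mmat z n V i j))))"
    by (rule mult_left_mono[OF mult_left_mono[OF mult_left_mono[OF mult_left_mono[OF h5] Zn0] b2] sq0]) simp
  also have "\<dots> \<le> sqrt m * (2 * (Zn^2 + l^2) * (2 * Zn * (1 * (2 * Zn * (sqrt 2 * hs_dist n U V)))))"
    by (rule mult_left_mono[OF mult_left_mono[OF mult_left_mono[OF mult_left_mono[OF h6] Zn0] b2] sq0]) simp
  also have "\<dots> = 16 * sqrt k * Zn^2 * (Zn^2 + l^2) * hs_dist n U V"
  proof -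
    have s2: "sqrt 2 * (sqrt 2 * x) = 2 * x" for x :: real by (simp add: mult.assoc[symmetric])
    show ?thesis unfolding sm by (simp add: power2_eq_square mult_ac s2)
  qed
  finally show ?thesis unfolding Zn_def l_def .
qed

lemma hs_dist_nonneg: "hs_dist n U V \<ge> 0"
  using hs_eta[of n U V] hsn_nonneg[of "2*n" "\<lambda>i j. eta n U i j - eta n V i j"]
  by (simp add: zero_le_mult_iff)

theorem lemma4:
  fixes z :: "nat \<Rightarrow> nat \<Rightarrow> real" and k :: "nat \<Rightarrow> nat" and \<zeta> \<kappa> :: real
  assumes z_ge1: "\<And>n j. j < n \<Longrightarrow> z n j \<ge> 1"
    and zeta_nonneg: "\<zeta> \<ge> 0"
    and squeezing: "\<exists>C>0. \<exists>N. \<forall>n\<ge>N. Znorm z n \<le> C * real n powr \<zeta>"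
    and lam_bounded: "\<exists>B. \<forall>n\<ge>1. \<bar>lam z n\<bar> \<le> B"
    and k_range: "\<And>n. n \<ge> 1 \<Longrightarrow> 1 \<le> k n \<and> k n \<le> n"
    and kappa_nonneg: "\<kappa> \<ge> 0"
    and k_bounded: "\<exists>K>0. \<exists>N. \<forall>n\<ge>N. real (k n) \<le> K * real n powr \<kappa>"
  shows "\<exists>C>0. \<exists>N. \<forall>n\<ge>N. \<forall>U V. unitary_mat n U \<longrightarrow> unitary_mat n V \<longrightarrow>
           \<bar>fobj z n (k n) U - fobj z n (k n) V\<bar> \<le> C * real n powr (4 * \<zeta> + \<kappa> / 2) * hs_dist n U V"
proof -
  obtain C N1 where C: "C > 0" and CN: "\<And>n. n \<ge> N1 \<Longrightarrow> Znorm z n \<le> C * real n powr \<zeta>"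
    using squeezing by blast
  obtain Bd where Bd: "\<And>n. n \<ge> 1 \<Longrightarrow> \<bar>lam z n\<bar> \<le> Bd" using lam_bounded by blast
  obtain K N2 where K: "K > 0" and KN: "\<And>n. n \<ge> N2 \<Longrightarrow> real (k n) \<le> K * real n powr \<kappa>"
    using k_bounded by blast
  define C' where "C' = 16 * C^4 * sqrt K * (1 + Bd^2)"
  have C'0: "C' > 0" unfolding C'_def using C K by (simp add: add_pos_nonneg)
  show ?thesis
  proof (intro exI[of _ C'] conjI C'0 exI[of _ "max 1 (max N1 N2)"] allI impI)
    fix n U V
    assume n: "max 1 (max N1 N2) \<le> n" and U: "unitary_mat n U" and V: "unitary_mat n V"
    have n1: "n \<ge> 1" and nN1: "n \<ge> N1" and nN2: "n \<ge> N2" using n by auto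
    define Zn where "Zn = Znorm z n"
    define l where "l = lam z n"
    define d where "d = hs_dist n U V"
    define p where "p = real n powr \<zeta>"
    define q where "q = real n powr (\<kappa>/2)"
    have d0: "d \<ge> 0" unfolding d_def by (rule hs_dist_nonneg)
    have Zn1: "Zn \<ge> 1" unfolding Zn_def using Znorm_ge1[of n z] z_ge1 n1 by blast
    have ZnC: "Zn \<le> C * p" unfolding Zn_def p_def using CN[OF nN1] .
    have l2: "l^2 \<le> Bd^2" unfolding l_def using Bd[OF n1]
      by (metis abs_ge_zero order_trans power2_abs power_mono)
    have kk: "k n \<le> n" using k_range[OF n1] by simp
    have core': "\<bar>fobj z n (k n) U - fobj z n (k n) V\<bar> \<le> 16 * sqrt (k n) * Zn^2 * (Zn^2 + l^2) * d"
      unfolding Zn_def l_def d_def by (rule core[OF z_ge1 n1 kk U V])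
    have P: "Zn^2 * (Zn^2 + l^2) \<le> (C * p)^4 * (1 + Bd^2)"
    proof -
      have z2: "1 \<le> Zn^2" using Zn1 by (simp add: one_le_power)
      have "Bd^2 * 1 \<le> Bd^2 * Zn^2" by (rule mult_left_mono[OF z2]) simp
      then have "l^2 \<le> Bd^2 * Zn^2" using l2 by simp
      then have "Zn^2 * (Zn^2 + l^2) \<le> Zn^2 * (Zn^2 + Bd^2 * Zn^2)" by (simp add: mult_left_mono)
      also have "\<dots> = Zn^4 * (1 + Bd^2)" by (simp add: algebra_simps power2_eq_square power4_eq_xxxx)
      also have "\<dots> \<le> (C * p)^4 * (1 + Bd^2)"
        using ZnC Zn1 by (intro mult_right_mono power_mono) auto
      finally show ?thesis .
    qed
    have S: "sqrt (k n) \<le> sqrt K * q"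
    proof -
      have "sqrt (k n) \<le> sqrt (K * real n powr \<kappa>)" using KN[OF nN2] by simp
      also have "\<dots> = sqrt K * q" unfolding q_def by (simp add: real_sqrt_mult powr_half_sqrt_powr)
      finally show ?thesis .
    qed
    have "\<bar>fobj z n (k n) U - fobj z n (k n) V\<bar> \<le> 16 * (sqrt (k n) * (Zn^2 * (Zn^2 + l^2))) * d"
      using core' by (simp add: mult_ac)
    also have "\<dots> \<le> 16 * ((sqrt K * q) * ((C * p)^4 * (1 + Bd^2))) * d"
    proof -
      have "sqrt (k n) * (Zn^2 * (Zn^2 + l^2)) \<le> (sqrt K * q) * ((C * p)^4 * (1 + Bd^2))"
        by (rule mult_mono[OF S P]) (use K in \<open>auto simp: q_def\<close>)
      then show ?thesis using d0 by (intro mult_right_mono) auto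
    qed
    also have "\<dots> = C' * (p^4 * q) * d" unfolding C'_def by (simp add: power_mult_distrib mult_ac)
    also have "p^4 * q = real n powr (4 * \<zeta> + \<kappa> / 2)"
      unfolding p_def q_def using n1 by (simp add: powr_power powr_add mult.commute)
    finally show "\<bar>fobj z n (k n) U - fobj z n (k n) V\<bar> \<le> C' * real n powr (4 * \<zeta> + \<kappa> / 2) * hs_dist n U V"
      unfolding d_def .
  qed
qed

end
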